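(* Let $Q$ be a convex polygon with finitely many sides and perimeter $L$. Parametrize its boundary by arc length $s$ measured from a fixed boundary point, let $P(s)$ be the boundary point at parameter $s$, and let $P'(s)=P(s+L/2)$ be the antipodal point. Let $\alpha(s)$ be the area of the part of $Q$ to the left of the directed line $P(s)P'(s)$ minus the area of the part to its right. Then $\alpha(s)$ is continuous and piecewise polynomial in $s$ of degree at most $2$. *)

theory Defs
  imports "HOL-Analysis.Analysis"
begin

definition cross2 :: "real^2 \<Rightarrow> real^2 \<Rightarrow> real" where
  "cross2 u v = u$1 * v$2 - u$2 * v$1"

text \<open>A convex polygon with n sides given by its vertices V 0, ..., V (n-1) listed in
  cyclic boundary order (indices taken mod n).  The orientation sign sigma is 1 for
  counterclockwise and -1 for clockwise order; strict convexity: every other vertex lies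
  strictly on one side of the line through each edge.\<close>
definition convex_polygon :: "(nat \<Rightarrow> real^2) \<Rightarrow> nat \<Rightarrow> real \<Rightarrow> bool" where
  "convex_polygon V n \<sigma> \<longleftrightarrow> n \<ge> 3 \<and> (\<sigma> = 1 \<or> \<sigma> = -1) \<and>
     (\<forall>i<n. \<forall>j<n. j \<noteq> i \<and> j \<noteq> Suc i mod n \<longrightarrow>
        \<sigma> * cross2 (V (Suc i mod n) - V i) (V j - V i) > 0)"

definition polygon_region :: "(nat \<Rightarrow> real^2) \<Rightarrow> nat \<Rightarrow> (real^2) set" where
  "polygon_region V n = convex hull (V ` {..<n})"

definition edge_len :: "(nat \<Rightarrow> real^2) \<Rightarrow> nat \<Rightarrow> nat \<Rightarrow> real" where
  "edge_len V n i = dist (V i) (V (Suc i mod n))"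

definition cum_len :: "(nat \<Rightarrow> real^2) \<Rightarrow> nat \<Rightarrow> nat \<Rightarrow> real" where
  "cum_len V n k = (\<Sum>i<k. edge_len V n i)"

definition perimeter :: "(nat \<Rightarrow> real^2) \<Rightarrow> nat \<Rightarrow> real" where
  "perimeter V n = cum_len V n n"

text \<open>Arc-length parametrization starting at V 0, for t in [0, L).\<close>
definition bdry_param0 :: "(nat \<Rightarrow> real^2) \<Rightarrow> nat \<Rightarrow> real \<Rightarrow> real^2" where
  "bdry_param0 V n t =
     (let i = (LEAST i. t < cum_len V n (Suc i))
      in V i + ((t - cum_len V n i) / edge_len V n i) *\<^sub>R (V (Suc i mod n) - V i))"

definition bdry_param :: "(nat \<Rightarrow> real^2) \<Rightarrow> nat \<Rightarrow> real \<Rightarrow> real^2" where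
  "bdry_param V n s =
     bdry_param0 V n (s - perimeter V n * of_int \<lfloor>s / perimeter V n\<rfloor>)"

definition area_diff :: "(real^2) set \<Rightarrow> real^2 \<Rightarrow> real^2 \<Rightarrow> real" where
  "area_diff Q p q =
     measure lebesgue (Q \<inter> {x. cross2 (q - p) (x - p) > 0})
   - measure lebesgue (Q \<inter> {x. cross2 (q - p) (x - p) < 0})"

end

theory Submission
  imports Defs "HOL-Analysis.Analysis"
begin


lemma open_sets_lebesgue: "open (S::(real^2) set) \<Longrightarrow> S \<in> sets lebesgue"
  by (simp add: borel_open)

lemma cross2_decomp: "cross2 d u *\<^sub>R w = cross2 w u *\<^sub>R d + cross2 d w *\<^sub>R u"
  by (simp add: vec_eq_iff forall_2 cross2_def algebra_simps)

lemma cross2_lin: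
  "cross2 (a + b) c = cross2 a c + cross2 b c" "cross2 a (b + c) = cross2 a b + cross2 a c"
  "cross2 (a - b) c = cross2 a c - cross2 b c" "cross2 a (b - c) = cross2 a b - cross2 a c"
  "cross2 (r *\<^sub>R a) c = r * cross2 a c" "cross2 a (r *\<^sub>R c) = r * cross2 a c"
  "cross2 (-a) c = - cross2 a c" "cross2 a (-c) = - cross2 a c"
  "cross2 a a = 0" "cross2 b a = - cross2 a b"
  by (auto simp: cross2_def algebra_simps)

lemma negligible_cross_line:
  assumes "v \<noteq> 0"
  shows "negligible {x::real^2. cross2 v (x - p) = c}"
proof -
  define w :: "real^2" where "w = vector [- v$2, v$1]"
  have "w \<noteq> 0" using assms by (auto simp: w_def vec_eq_iff forall_2)
  have "{x::real^2. cross2 v (x - p) = c} = {x. w \<bullet> x = c + cross2 v p}"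
    by (auto simp: w_def cross2_def inner_vec_def sum_2 algebra_simps)
  then show ?thesis using negligible_hyperplane[of w] \<open>w \<noteq> 0\<close> by simp
qed


definition Fn :: "(real^2) set \<Rightarrow> real^2 \<Rightarrow> real^2 \<Rightarrow> real^2 \<Rightarrow> real" where
  "Fn Q p q x = indicator (Q \<inter> {x. cross2 (q - p) (x - p) > 0}) x
              - indicator (Q \<inter> {x. cross2 (q - p) (x - p) < 0}) x"

lemma area_diff_integral:
  assumes "Q \<in> lmeasurable"
  shows "(Fn Q p q has_integral area_diff Q p q) UNIV"
proof -
  have o1: "open {x::real^2. cross2 (q - p) (x - p) > 0}"
    unfolding cross2_def by (intro open_Collect_less continuous_intros)
  have o2: "open {x::real^2. cross2 (q - p) (x - p) < 0}"
    unfolding cross2_def by (intro open_Collect_less continuous_intros)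
  have m1: "Q \<inter> {x. cross2 (q - p) (x - p) > 0} \<in> lmeasurable"
    by (intro fmeasurable_Int_fmeasurable assms open_sets_lebesgue o1)
  have m2: "Q \<inter> {x. cross2 (q - p) (x - p) < 0} \<in> lmeasurable"
    by (intro fmeasurable_Int_fmeasurable assms open_sets_lebesgue o2)
  show ?thesis
    unfolding Fn_def area_diff_def
    by (intro has_integral_diff m1[unfolded lmeasurable_iff_has_integral] m2[unfolded lmeasurable_iff_has_integral])
qed

lemma KL_pos:
  assumes "convex Q" "Q \<in> lmeasurable" "p1 \<in> Q" "p2 \<in> Q" "q \<in> Q"
    and sup1: "\<forall>x\<in>Q. cross2 (p2 - p1) (x - p1) \<ge> 0"
    and "e \<noteq> 0" and supq: "\<forall>x\<in>Q. cross2 e (x - q) \<ge> 0"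
    and hpos: "cross2 (p2 - p1) (q - p1) > 0"
  shows "area_diff Q p2 q - area_diff Q p1 q = cross2 (p2 - p1) (q - p1)"
proof -
  define d where "d = p2 - p1"
  define u where "u = q - p1"
  define h where "h = cross2 d u"
  have h: "h > 0" using hpos by (simp add: h_def d_def u_def)
  define A where "A x = cross2 (x - p1) u" for x
  define B where "B x = cross2 d (x - p1)" for x
  define T where "T = convex hull {p1, p2, q}"
  have TQ: "T \<subseteq> Q" unfolding T_def using assms by (intro hull_minimal) auto
  have Tc: "compact T" unfolding T_def by (intro finite_imp_compact_convex_hull) auto
  have Tm: "T \<in> lmeasurable" using Tc by (rule lmeasurable_compact)
  have "measure lebesgue T = measure lborel T"
    using Tc by (intro measure_completion) (auto dest: compact_imp_closed)
  also have "\<dots> = h / 2" unfolding T_def Simplex_Content.content_triangle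
    using h by (simp add: h_def d_def u_def cross2_def algebra_simps)
  finally have muT: "measure lebesgue T = h / 2" .
  have dnz: "d \<noteq> 0" and unz: "u \<noteq> 0" and pqnz: "p2 - q \<noteq> 0"
    using h by (auto simp: h_def d_def u_def cross2_def)
  define N where "N = {x. cross2 u (x - p1) = 0} \<union> {x. cross2 d (x - p1) = 0}
      \<union> {x. cross2 (p2 - q) (x - p1) = h} \<union> {x. cross2 e (x - q) = 0}"
  have negN: "negligible N" unfolding N_def
    using negligible_cross_line dnz unz pqnz \<open>e \<noteq> 0\<close>
    by (intro negligible_Un) auto
  have Tchar: "x \<in> T \<longleftrightarrow> A x \<ge> 0 \<and> B x \<ge> 0 \<and> A x + B x \<le> h" for x
  proof
    assume "x \<in> T"
    then obtain a b where x: "x = p1 + a *\<^sub>R d + b *\<^sub>R u" "0 \<le> a" "0 \<le> b" "a + b \<le> 1"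
      unfolding T_def convex_hull_3_alt d_def u_def by auto
    have "A x = a * h" "B x = b * h" unfolding A_def B_def h_def x(1)
      by (simp_all add: cross2_def algebra_simps)
    moreover have "(a + b) * h \<le> 1 * h" using x(4) h by (intro mult_right_mono) auto
    ultimately show "A x \<ge> 0 \<and> B x \<ge> 0 \<and> A x + B x \<le> h"
      using x h by (simp add: algebra_simps)
  next
    assume a: "A x \<ge> 0 \<and> B x \<ge> 0 \<and> A x + B x \<le> h"
    have "h *\<^sub>R (x - p1) = A x *\<^sub>R d + B x *\<^sub>R u"
      unfolding h_def A_def B_def by (rule cross2_decomp)
    then have "x = p1 + (A x / h) *\<^sub>R d + (B x / h) *\<^sub>R u"
    proof -
      have "x = p1 + (1/h) *\<^sub>R (h *\<^sub>R (x - p1))" using h by simp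
      also have "\<dots> = p1 + (A x / h) *\<^sub>R d + (B x / h) *\<^sub>R u"
        unfolding \<open>h *\<^sub>R (x - p1) = _\<close> by (simp add: scaleR_add_right)
      finally show ?thesis .
    qed
    moreover have "A x / h + B x / h \<le> 1" using a h by (simp add: add_divide_distrib[symmetric])
    ultimately show "x \<in> T" unfolding T_def convex_hull_3_alt d_def u_def
      using a h divide_nonneg_pos[of "A x" h] divide_nonneg_pos[of "B x" h] by blast
  qed
  have c1: "cross2 (q - p1) (x - p1) = - A x" for x
    unfolding A_def u_def by (simp add: cross2_def algebra_simps)
  have c2: "cross2 (q - p2) (x - p2) = h - A x - B x" for x
    unfolding A_def B_def h_def d_def u_def by (simp add: cross2_def algebra_simps)
  have lineN: "A x + B x = cross2 (p2 - q) (x - p1)" for x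
    unfolding A_def B_def d_def u_def by (simp add: cross2_def algebra_simps)
  have pw: "Fn Q p2 q x - Fn Q p1 q x = 2 * indicator T x" if xN: "x \<notin> N" for x
  proof (cases "x \<in> Q")
    case False
    then show ?thesis using TQ by (auto simp: Fn_def indicator_def)
  next
    case True
    have Bnn: "B x \<ge> 0" using sup1 True by (simp add: B_def d_def)
    have An: "A x \<noteq> 0" using xN by (simp add: N_def A_def u_def cross2_def algebra_simps)
    have Bn: "B x \<noteq> 0" using xN by (simp add: N_def B_def)
    have ABn: "A x + B x \<noteq> h" using xN lineN by (simp add: N_def)
    have en: "cross2 e (x - q) \<noteq> 0" using xN by (simp add: N_def)
    have notwedge: "\<not> (A x < 0 \<and> A x + B x > h)"
    proof
      assume w: "A x < 0 \<and> A x + B x > h"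
      define E1 where "E1 = cross2 e (p1 - q)"
      define E2 where "E2 = cross2 e (p2 - q)"
      have E: "E1 \<ge> 0" "E2 \<ge> 0" using supq assms by (auto simp: E1_def E2_def)
      have hid: "h *\<^sub>R (x - p1) = A x *\<^sub>R d + B x *\<^sub>R u"
        unfolding h_def A_def B_def by (rule cross2_decomp)
      have "h * cross2 e (x - q) = cross2 e (h *\<^sub>R (x - p1)) - h * cross2 e u"
        by (simp add: cross2_def u_def algebra_simps)
      also have "\<dots> = A x * E2 - (A x + B x - h) * E1"
        unfolding hid by (simp add: cross2_def E1_def E2_def d_def u_def algebra_simps)
      finally have eq: "h * cross2 e (x - q) = A x * E2 - (A x + B x - h) * E1" .
      have "A x * E2 \<le> 0" using w E by (simp add: mult_nonpos_nonneg)
      moreover have "(A x + B x - h) * E1 \<ge> 0" using w E by simp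
      ultimately have "h * cross2 e (x - q) \<le> 0" using eq by linarith
      moreover have "cross2 e (x - q) \<ge> 0" using supq True by auto
      ultimately have "cross2 e (x - q) = 0" using h
        by (metis mult_pos_pos not_less order_antisym_conv)
      with en show False by simp
    qed
    show ?thesis
      unfolding Fn_def using True c1 c2 Tchar[of x] An Bn ABn Bnn notwedge
      by (auto simp: indicator_def)
  qed
  have "((\<lambda>x. 2 * indicator T x) has_integral 2 * measure lebesgue T) UNIV"
    using Tm[unfolded lmeasurable_iff_has_integral] by (intro has_integral_mult_right)
  then have "((\<lambda>x. Fn Q p2 q x - Fn Q p1 q x) has_integral 2 * measure lebesgue T) UNIV"
    by (rule has_integral_spike[OF negN, rotated]) (use pw in auto)
  moreover have "((\<lambda>x. Fn Q p2 q x - Fn Q p1 q x) has_integral area_diff Q p2 q - area_diff Q p1 q) UNIV"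
    by (intro has_integral_diff area_diff_integral assms)
  ultimately have "area_diff Q p2 q - area_diff Q p1 q = 2 * measure lebesgue T"
    using has_integral_unique by blast
  then show ?thesis using muT by (simp add: h_def d_def u_def)
qed


lemma collinear_par:
  assumes "cross2 d u = 0" "d \<noteq> 0"
  shows "\<exists>t. u = t *\<^sub>R d"
proof -
  have nz: "d$1 * d$1 + d$2 * d$2 \<noteq> 0" using assms(2)
    by (auto simp: vec_eq_iff forall_2 sum_squares_eq_zero_iff)
  define t where "t = (u$1 * d$1 + u$2 * d$2) / (d$1 * d$1 + d$2 * d$2)"
  have e: "d$1 * u$2 = d$2 * u$1" using assms(1) by (simp add: cross2_def)
  have "u$1 = t * d$1"
    unfolding t_def using nz by (simp add: field_simps) (metis e mult.commute mult.left_commute distrib_left)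
  moreover have "u$2 = t * d$2"
    unfolding t_def using nz by (simp add: field_simps) (metis e mult.commute mult.left_commute distrib_left add.commute)
  ultimately show ?thesis by (auto simp: vec_eq_iff forall_2)
qed

lemma KL_col:
  assumes "cross2 (p2 - p1) (q - p1) = 0" "q \<notin> closed_segment p1 p2"
  shows "area_diff Q p2 q = area_diff Q p1 q"
proof (cases "p2 = p1")
  case True then show ?thesis by simp
next
  case False
  define d where "d = p2 - p1"
  have "d \<noteq> 0" using False by (simp add: d_def)
  then obtain t where t: "q - p1 = t *\<^sub>R d" using collinear_par assms(1) d_def by blast
  have q: "q = (1 - t) *\<^sub>R p1 + t *\<^sub>R p2" using t by (simp add: d_def algebra_simps)
  have tt: "t < 0 \<or> t > 1"
  proof (rule ccontr)
    assume "\<not> (t < 0 \<or> t > 1)"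
    then have "q \<in> closed_segment p1 p2" unfolding q closed_segment_def by auto
    with assms(2) show False by simp
  qed
  have c1: "cross2 (q - p1) (x - p1) = t * cross2 d (x - p1)" for x
    unfolding t by (simp add: cross2_def algebra_simps)
  have c2: "cross2 (q - p2) (x - p2) = (t - 1) * cross2 d (x - p1)" for x
  proof -
    have e: "q - p2 = (t - 1) *\<^sub>R (p2 - p1)" using t by (simp add: d_def algebra_simps)
    show ?thesis unfolding e d_def by (simp add: cross2_def algebra_simps)
  qed
  have s1: "{x. cross2 (q - p2) (x - p2) > 0} = {x. cross2 (q - p1) (x - p1) > 0}"
    unfolding c1 c2 using tt by (auto simp: zero_less_mult_iff)
  have s2: "{x. cross2 (q - p2) (x - p2) < 0} = {x. cross2 (q - p1) (x - p1) < 0}"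
    unfolding c1 c2 using tt by (auto simp: mult_less_0_iff)
  show ?thesis unfolding area_diff_def s1 s2 ..
qed

lemma KL:
  assumes "convex Q" "Q \<in> lmeasurable" "p1 \<in> Q" "p2 \<in> Q" "q \<in> Q"
    and sg: "\<sigma> = 1 \<or> \<sigma> = -1"
    and sup1: "\<forall>x\<in>Q. \<sigma> * cross2 (p2 - p1) (x - p1) \<ge> 0"
    and "e \<noteq> 0" and supq: "\<forall>x\<in>Q. cross2 e (x - q) \<ge> 0"
    and nseg: "q \<notin> closed_segment p1 p2"
  shows "area_diff Q p2 q - area_diff Q p1 q = cross2 (p2 - p1) (q - p1)"
proof (cases "cross2 (p2 - p1) (q - p1) = 0")
  case True
  then show ?thesis using KL_col[OF True nseg] by simp
next
  case hne: False
  show ?thesis using sg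
  proof
    assume "\<sigma> = 1"
    then have s: "\<forall>x\<in>Q. cross2 (p2 - p1) (x - p1) \<ge> 0" using sup1 by simp
    then have "cross2 (p2 - p1) (q - p1) > 0" using hne assms(5) by force
    then show ?thesis by (rule KL_pos[OF assms(1-5) s \<open>e \<noteq> 0\<close> supq])
  next
    assume "\<sigma> = -1"
    then have s: "\<forall>x\<in>Q. cross2 (p1 - p2) (x - p2) \<ge> 0" using sup1
      by (simp add: cross2_def algebra_simps)
    have eqh: "cross2 (p1 - p2) (q - p2) = - cross2 (p2 - p1) (q - p1)"
      by (simp add: cross2_def algebra_simps)
    then have "cross2 (p1 - p2) (q - p2) > 0" using hne s assms(5) by force
    from KL_pos[OF assms(1) assms(2) assms(4) assms(3) assms(5) s \<open>e \<noteq> 0\<close> supq this]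
    show ?thesis using eqh by simp
  qed
qed

lemma area_diff_swap: "area_diff Q q p = - area_diff Q p q"
proof -
  have "cross2 (p - q) (x - q) = - cross2 (q - p) (x - p)" for x
    by (simp add: cross2_def algebra_simps)
  then show ?thesis unfolding area_diff_def by (simp add: neg_less_0_iff_less)
qed



locale cpoly =
  fixes V :: "nat \<Rightarrow> real^2" and n :: nat and \<sigma> :: real
  assumes cp: "convex_polygon V n \<sigma>"
begin

abbreviation "E i \<equiv> V (Suc i mod n) - V i"
abbreviation "c k \<equiv> cum_len V n k"
abbreviation "L \<equiv> perimeter V n"
abbreviation "Q \<equiv> polygon_region V n"

lemma n3: "n \<ge> 3" and sg: "\<sigma> = 1 \<or> \<sigma> = -1"
  and strict: "\<And>i j. i < n \<Longrightarrow> j < n \<Longrightarrow> j \<noteq> i \<Longrightarrow> j \<noteq> Suc i mod n \<Longrightarrow> \<sigma> * cross2 (E i) (V j - V i) > 0"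
  using cp unfolding convex_polygon_def by auto

lemma third: assumes "i < n" shows "\<exists>j<n. j \<noteq> i \<and> j \<noteq> Suc i mod n"
proof (rule ccontr)
  assume "\<not> ?thesis"
  then have "{..<n} \<subseteq> {i, Suc i mod n}" by auto
  then have "card {..<n} \<le> card {i, Suc i mod n}" by (intro card_mono) auto
  also have "\<dots> \<le> 2" by (simp add: card_insert_if)
  finally show False using n3 by simp
qed

lemma E_nz: assumes "i < n" shows "E i \<noteq> 0"
proof
  assume h: "E i = 0"
  obtain j where "j < n" "j \<noteq> i" "j \<noteq> Suc i mod n" using third[OF assms] by blast
  from strict[OF assms this] h show False by (simp add: cross2_def)
qed

lemma e_pos: assumes "i < n" shows "edge_len V n i > 0"
  using E_nz[OF assms] unfolding edge_len_def by (simp add: dist_commute)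

lemma e_nn: "edge_len V n i \<ge> 0" unfolding edge_len_def by simp

lemma c_Suc: "c (Suc k) = c k + edge_len V n k" unfolding cum_len_def by simp
lemma c_0: "c 0 = 0" unfolding cum_len_def by simp

lemma c_mono: "k \<le> m \<Longrightarrow> c k \<le> c m"
proof (induction m)
  case 0 then show ?case by simp
next
  case (Suc m) then show ?case using e_nn[of m] c_Suc[of m] by (cases "k = Suc m") auto
qed

lemma c_strict: assumes "k < m" "m \<le> n" shows "c k < c m"
proof -
  have "c k \<le> c (m - 1)" using assms by (intro c_mono) auto
  moreover have "c m = c (m - 1) + edge_len V n (m - 1)" using c_Suc[of "m - 1"] assms by simp
  moreover have "edge_len V n (m - 1) > 0" using assms by (intro e_pos) auto
  ultimately show ?thesis by simp
qed

lemma c_nn: "c k \<ge> 0" using c_mono[of 0 k] by (simp add: c_0)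

lemma L_pos: "L > 0" unfolding perimeter_def using c_strict[of 0 n] n3 by (simp add: c_0)

lemma c_le_L: "k \<le> n \<Longrightarrow> c k \<le> L" unfolding perimeter_def by (rule c_mono)

lemma seg_exists: assumes "0 \<le> t" "t < L" shows "\<exists>i<n. c i \<le> t \<and> t < c (Suc i)"
proof -
  define i where "i = (LEAST k. t < c (Suc k))"
  have ex: "t < c (Suc (n - 1))" using assms n3 by (simp add: perimeter_def)
  have i1: "t < c (Suc i)" unfolding i_def by (rule LeastI[of "\<lambda>k. t < c (Suc k)", OF ex])
  have "i \<le> n - 1" unfolding i_def by (rule Least_le[of "\<lambda>k. t < c (Suc k)", OF ex])
  then have "i < n" using n3 by simp
  moreover have "c i \<le> t"
  proof (cases i)
    case 0 then show ?thesis using assms by (simp add: c_0)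
  next
    case (Suc k)
    have "\<not> t < c (Suc k)" using not_less_Least[of k "\<lambda>k. t < c (Suc k)"] Suc unfolding i_def by simp
    then show ?thesis using Suc by simp
  qed
  ultimately show ?thesis using i1 by blast
qed

lemma least_eq: assumes "i < n" "c i \<le> t" "t < c (Suc i)" shows "(LEAST k. t < c (Suc k)) = i"
proof (rule Least_equality)
  show "t < c (Suc i)" by fact
  fix k assume "t < c (Suc k)"
  show "i \<le> k"
  proof (rule ccontr)
    assume "\<not> i \<le> k" then have "Suc k \<le> i" by simp
    then have "c (Suc k) \<le> c i" by (rule c_mono)
    with \<open>t < c (Suc k)\<close> assms(2) show False by simp
  qed
qed

lemma bp0_edge: assumes "i < n" "c i \<le> t" "t < c (Suc i)"
  shows "bdry_param0 V n t = V i + ((t - c i) / edge_len V n i) *\<^sub>R E i"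
  unfolding bdry_param0_def Let_def least_eq[OF assms] ..

lemma bp_reduce: assumes "0 \<le> x" "x < L"
  shows "bdry_param V n (x + of_int j * L) = bdry_param0 V n x"
proof -
  have "(x + of_int j * L) / L = x / L + of_int j" using L_pos by (simp add: field_simps)
  moreover have "\<lfloor>x / L\<rfloor> = 0" using assms L_pos by (simp add: floor_eq_iff)
  ultimately have "\<lfloor>(x + of_int j * L) / L\<rfloor> = j" by simp
  then show ?thesis unfolding bdry_param_def by (simp add: algebra_simps)
qed

lemma edge_lt: assumes "i < n" "c i \<le> x" "x < c (Suc i)"
  shows "bdry_param V n (x + of_int j * L) = V i + ((x - c i) / edge_len V n i) *\<^sub>R E i"
proof -
  have "0 \<le> x" using c_nn[of i] assms by simp
  moreover have "x < L" using c_le_L[of "Suc i"] assms by simp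
  ultimately show ?thesis using bp_reduce bp0_edge assms by simp
qed

lemma edge: assumes "i < n" "c i \<le> x" "x \<le> c (Suc i)"
  shows "bdry_param V n (x + of_int j * L) = V i + ((x - c i) / edge_len V n i) *\<^sub>R E i"
proof (cases "x < c (Suc i)")
  case True then show ?thesis using edge_lt assms by simp
next
  case False
  then have x: "x = c (Suc i)" using assms by simp
  have ep: "edge_len V n i > 0" using e_pos assms by simp
  have rhs: "V i + ((x - c i) / edge_len V n i) *\<^sub>R E i = V (Suc i mod n)"
    using ep by (simp add: x c_Suc)
  show ?thesis
  proof (cases "Suc i < n")
    case True
    have "bdry_param V n (x + of_int j * L) = V (Suc i) + ((x - c (Suc i)) / edge_len V n (Suc i)) *\<^sub>R E (Suc i)"
      using edge_lt[OF True, of x j] c_strict[of "Suc i" "Suc (Suc i)"] True x by simp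
    then show ?thesis using rhs True x by simp
  next
    case False
    then have si: "Suc i = n" using assms by simp
    have "x + of_int j * L = 0 + of_int (j + 1) * L" using x si by (simp add: perimeter_def algebra_simps)
    moreover have "bdry_param V n (0 + of_int (j + 1) * L) = V 0 + ((0 - c 0) / edge_len V n 0) *\<^sub>R E 0"
      using edge_lt[of 0 0 "j+1"] n3 c_strict[of 0 1] by (simp add: c_0)
    ultimately show ?thesis using rhs si by (simp add: c_0)
  qed
qed

end


context cpoly begin

lemma Q_compact: "compact Q" unfolding polygon_region_def
  by (intro finite_imp_compact_convex_hull) auto
lemma Q_convex: "convex Q" unfolding polygon_region_def by simp
lemma Q_meas: "Q \<in> lmeasurable" using Q_compact by (rule lmeasurable_compact)
lemma V_in_Q: "j < n \<Longrightarrow> V j \<in> Q" unfolding polygon_region_def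
  by (intro hull_inc) auto

lemma Vmod_in_Q: "V (Suc i mod n) \<in> Q" using n3 by (intro V_in_Q) simp

lemma edge_in_Q: assumes "i < n" "0 \<le> l" "l \<le> 1" shows "V i + l *\<^sub>R E i \<in> Q"
proof -
  have "V i + l *\<^sub>R E i = (1 - l) *\<^sub>R V i + l *\<^sub>R V (Suc i mod n)" by (simp add: algebra_simps)
  also have "\<dots> \<in> Q" using assms V_in_Q Vmod_in_Q Q_convex by (intro convexD) auto
  finally show ?thesis .
qed

lemma vertex_nn: assumes "i < n" "j < n" shows "\<sigma> * cross2 (E i) (V j - V i) \<ge> 0"
proof -
  consider "j = i" | "j = Suc i mod n" | "j \<noteq> i \<and> j \<noteq> Suc i mod n" by blast
  then show ?thesis
  proof cases
    case 1 then show ?thesis by (simp add: cross2_def)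
  next
    case 2 then show ?thesis by (simp add: cross2_def)
  next
    case 3 then show ?thesis using strict[OF assms] by (simp add: less_imp_le)
  qed
qed

lemma support: assumes "i < n" "x \<in> Q" shows "\<sigma> * cross2 (E i) (x - V i) \<ge> 0"
proof -
  define S where "S = {x. \<sigma> * cross2 (E i) (x - V i) \<ge> 0}"
  have "convex S" unfolding convex_def S_def
  proof (intro allI impI ballI, clarsimp)
    fix x y :: "real^2" and u v :: real
    assume h: "0 \<le> \<sigma> * cross2 (E i) (x - V i)" "0 \<le> \<sigma> * cross2 (E i) (y - V i)" "0 \<le> u" "0 \<le> v" "u + v = 1"
    have "\<sigma> * cross2 (E i) (u *\<^sub>R x + v *\<^sub>R y - V i)
        = u * (\<sigma> * cross2 (E i) (x - V i)) + v * (\<sigma> * cross2 (E i) (y - V i))"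
    proof -
      have eq: "u *\<^sub>R x + v *\<^sub>R y - V i = u *\<^sub>R (x - V i) + v *\<^sub>R (y - V i)"
        using h(5) by (simp add: algebra_simps) (metis scaleR_add_left scaleR_one add_diff_eq)
      show ?thesis unfolding eq by (simp add: cross2_def algebra_simps)
    qed
    then show "0 \<le> \<sigma> * cross2 (E i) (u *\<^sub>R x + v *\<^sub>R y - V i)" using h by simp
  qed
  moreover have "V ` {..<n} \<subseteq> S" unfolding S_def using vertex_nn assms(1) by auto
  ultimately have "Q \<subseteq> S" unfolding polygon_region_def by (intro hull_minimal)
  then show ?thesis using assms(2) by (auto simp: S_def)
qed

lemma mod1: "j < n \<Longrightarrow> Suc j mod n \<noteq> j"
  using n3 by (auto simp: mod_Suc)
lemma mod2: "i < n \<Longrightarrow> Suc (Suc i mod n) mod n \<noteq> i"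
  using n3 by (auto simp: mod_Suc split: if_splits)

lemma inj_core:
  assumes "i < n" "i' < n" "0 \<le> l" "l < 1" "0 \<le> m" "m < 1"
    and eq: "V i + l *\<^sub>R E i = V i' + m *\<^sub>R E i'"
  shows "i = i' \<and> l = m"
proof (cases "i = i'")
  case True
  then have "l *\<^sub>R E i = m *\<^sub>R E i" using eq by simp
  then show ?thesis using True E_nz[OF assms(1)] by simp
next
  case ne: False
  define f where "f y = \<sigma> * cross2 (E i) (y - V i)" for y
  have f0: "f (V i + l *\<^sub>R E i) = 0" by (simp add: f_def cross2_def algebra_simps)
  have fr: "f (V i' + m *\<^sub>R E i') = (1 - m) * f (V i') + m * f (V (Suc i' mod n))"
    by (simp add: f_def cross2_def algebra_simps)
  have nn1: "f (V i') \<ge> 0" unfolding f_def using vertex_nn assms by simp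
  have nn2: "f (V (Suc i' mod n)) \<ge> 0" unfolding f_def using vertex_nn assms n3 by simp
  have sum0: "(1 - m) * f (V i') + m * f (V (Suc i' mod n)) = 0" using f0 fr eq by simp
  have t1: "(1 - m) * f (V i') \<ge> 0" "m * f (V (Suc i' mod n)) \<ge> 0" using nn1 nn2 assms by simp_all
  have "f (V i') = 0" using sum0 t1 assms(6) by (simp add: add_nonneg_eq_0_iff)
  then have i': "i' = Suc i mod n" using strict[OF assms(1) assms(2)] ne unfolding f_def by force
  have k1: "Suc i' mod n \<noteq> i" using mod2 assms i' by simp
  have k2: "Suc i' mod n \<noteq> Suc i mod n" using mod1[OF assms(2)] i' by simp
  have "f (V (Suc i' mod n)) > 0" unfolding f_def using strict[OF assms(1) _ k1 k2] n3 by simp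
  then have "m = 0" using sum0 t1 by (simp add: add_nonneg_eq_0_iff)
  then have "V i + l *\<^sub>R E i = V (Suc i mod n)" using eq i' by simp
  then have "(1 - l) *\<^sub>R E i = 0" by (simp add: algebra_simps)
  then show ?thesis using E_nz[OF assms(1)] assms(4) by simp
qed

lemma bp0_inj: assumes "0 \<le> t1" "t1 < L" "0 \<le> t2" "t2 < L" "bdry_param0 V n t1 = bdry_param0 V n t2"
  shows "t1 = t2"
proof -
  obtain i where i: "i < n" "c i \<le> t1" "t1 < c (Suc i)" using seg_exists assms by blast
  obtain i' where i': "i' < n" "c i' \<le> t2" "t2 < c (Suc i')" using seg_exists assms by blast
  have ep: "edge_len V n i > 0" "edge_len V n i' > 0" using e_pos i i' by auto
  have l: "0 \<le> (t1 - c i) / edge_len V n i" "(t1 - c i) / edge_len V n i < 1"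
    using i ep by (auto simp: c_Suc divide_simps)
  have m: "0 \<le> (t2 - c i') / edge_len V n i'" "(t2 - c i') / edge_len V n i' < 1"
    using i' ep by (auto simp: c_Suc divide_simps)
  have "V i + ((t1 - c i) / edge_len V n i) *\<^sub>R E i = V i' + ((t2 - c i') / edge_len V n i') *\<^sub>R E i'"
    using assms(5) bp0_edge i i' by simp
  from inj_core[OF i(1) i'(1) l m this] have "i = i'" "(t1 - c i) / edge_len V n i = (t2 - c i') / edge_len V n i'"
    by auto
  then show ?thesis using ep by (simp add: divide_simps)
qed

lemma bp_red: "bdry_param V n a = bdry_param0 V n (a - L * of_int \<lfloor>a / L\<rfloor>)"
  and red_bounds: "0 \<le> a - L * of_int \<lfloor>a / L\<rfloor>" "a - L * of_int \<lfloor>a / L\<rfloor> < L"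
proof -
  show "bdry_param V n a = bdry_param0 V n (a - L * of_int \<lfloor>a / L\<rfloor>)" unfolding bdry_param_def ..
  have "of_int \<lfloor>a / L\<rfloor> * L \<le> a" "a < (of_int \<lfloor>a / L\<rfloor> + 1) * L"
    using floor_divide_lower[OF L_pos] floor_divide_upper[OF L_pos] by auto
  then show "0 \<le> a - L * of_int \<lfloor>a / L\<rfloor>" "a - L * of_int \<lfloor>a / L\<rfloor> < L"
    using L_pos by (auto simp: field_simps)
qed

lemma no_wrap: assumes "bdry_param V n a = bdry_param V n b" "0 < a - b" "a - b < L" shows False
proof -
  have "a - L * of_int \<lfloor>a / L\<rfloor> = b - L * of_int \<lfloor>b / L\<rfloor>"
    using bp0_inj red_bounds assms(1) bp_red by metis
  then have "a - b = L * of_int (\<lfloor>a / L\<rfloor> - \<lfloor>b / L\<rfloor>)" by (simp add: algebra_simps)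
  define k where "k = \<lfloor>a / L\<rfloor> - \<lfloor>b / L\<rfloor>"
  have "a - b = L * of_int k" unfolding k_def by fact
  then have "0 < (of_int k :: real) \<and> (of_int k :: real) < 1"
    using assms L_pos by (auto simp: zero_less_mult_iff)
  then have "0 < k" "k < 1" by simp_all
  then show False by simp
qed

lemma bp_periodic: "bdry_param V n (a + of_int j * L) = bdry_param V n a"
proof -
  have "(a + of_int j * L) / L = a / L + of_int j" using L_pos by (simp add: field_simps)
  then have "\<lfloor>(a + of_int j * L) / L\<rfloor> = \<lfloor>a / L\<rfloor> + j" by simp
  then show ?thesis unfolding bdry_param_def by (simp add: algebra_simps)
qed

end


lemma poly_form:
  "\<exists>a b cc. \<forall>s::real. K + cross2 (X + s *\<^sub>R U) C - cross2 (Y + s *\<^sub>R W) (Z + s *\<^sub>R U) = a + b * s + cc * s\<^sup>2"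
  apply (rule exI[of _ "K + cross2 X C - cross2 Y Z"])
  apply (rule exI[of _ "cross2 U C - cross2 W Z - cross2 Y U"])
  apply (rule exI[of _ "- cross2 W U"])
  by (simp add: cross2_def algebra_simps power2_eq_square)

lemma seg_affine:
  assumes "z \<in> closed_segment (A + l1 *\<^sub>R D) (A + l2 *\<^sub>R D)"
  shows "\<exists>\<theta>. 0 \<le> \<theta> \<and> \<theta> \<le> 1 \<and> z = A + ((1 - \<theta>) * l1 + \<theta> * l2) *\<^sub>R D"
proof -
  obtain \<theta> where th: "0 \<le> \<theta>" "\<theta> \<le> 1" "z = (1 - \<theta>) *\<^sub>R (A + l1 *\<^sub>R D) + \<theta> *\<^sub>R (A + l2 *\<^sub>R D)"
    using assms unfolding closed_segment_def by auto
  have "z = A + ((1 - \<theta>) * l1 + \<theta> * l2) *\<^sub>R D"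
    unfolding th(3) by (simp add: algebra_simps)
  then show ?thesis using th by blast
qed

context cpoly begin

lemma stay:
  assumes "a0 < a1" and nb: "\<And>s. a0 < s \<Longrightarrow> s < a1 \<Longrightarrow> \<not> (\<exists>k\<le>n. \<exists>j::int. w + s = c k + of_int j * L)"
  shows "\<exists>i<n. \<exists>j::int. \<forall>s\<in>{a0..a1}. c i \<le> w + s - of_int j * L \<and> w + s - of_int j * L \<le> c (Suc i)"
proof -
  define m where "m = (a0 + a1) / 2"
  have m: "a0 < m" "m < a1" using assms(1) by (auto simp: m_def)
  define j where "j = \<lfloor>(w + m) / L\<rfloor>"
  have r: "0 \<le> w + m - of_int j * L" "w + m - of_int j * L < L"
    using red_bounds[of "w + m"] by (simp_all add: j_def mult.commute)
  obtain i where i: "i < n" "c i \<le> w + m - of_int j * L" "w + m - of_int j * L < c (Suc i)"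
    using seg_exists[OF r] by blast
  have "\<forall>s\<in>{a0..a1}. c i \<le> w + s - of_int j * L \<and> w + s - of_int j * L \<le> c (Suc i)"
  proof
    fix s assume s: "s \<in> {a0..a1}"
    show "c i \<le> w + s - of_int j * L \<and> w + s - of_int j * L \<le> c (Suc i)"
    proof (rule ccontr)
      assume "\<not> ?thesis"
      then consider "w + s - of_int j * L < c i" | "w + s - of_int j * L > c (Suc i)" by linarith
      then show False
      proof cases
        case 1
        define y where "y = c i + of_int j * L - w"
        have "y \<noteq> m"
        proof
          assume "y = m"
          then have "w + m = c i + of_int j * L" by (simp add: y_def)
          then show False using nb[OF m] less_imp_le[OF i(1)] by blast
        qed
        then have "a0 < y" "y < a1" using 1 i s m by (auto simp: y_def)
        moreover have "w + y = c i + of_int j * L" by (simp add: y_def)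
        ultimately show False using nb[of y] less_imp_le[OF i(1)] by blast
      next
        case 2
        define y where "y = c (Suc i) + of_int j * L - w"
        have "a0 < y" "y < a1" using 2 i s m by (auto simp: y_def)
        moreover have "w + y = c (Suc i) + of_int j * L" by (simp add: y_def)
        moreover have "Suc i \<le> n" using i(1) by simp
        ultimately show False using nb[of y] by blast
      qed
    qed
  qed
  then show ?thesis using i(1) by blast
qed

lemma on_edge:
  assumes "i < n" and st: "\<forall>s\<in>{a0..a1}. c i \<le> w + s - of_int j * L \<and> w + s - of_int j * L \<le> c (Suc i)"
    and s: "s \<in> {a0..a1}"
  shows "bdry_param V n (w + s) = V i + ((w + s - of_int j * L - c i) / edge_len V n i) *\<^sub>R E i"
    and "0 \<le> (w + s - of_int j * L - c i) / edge_len V n i"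
    and "(w + s - of_int j * L - c i) / edge_len V n i \<le> 1"
proof -
  have b: "c i \<le> w + s - of_int j * L" "w + s - of_int j * L \<le> c (Suc i)" using st s by auto
  have "bdry_param V n ((w + s - of_int j * L) + of_int j * L) = V i + ((w + s - of_int j * L - c i) / edge_len V n i) *\<^sub>R E i"
    by (rule edge[OF assms(1) b])
  then show "bdry_param V n (w + s) = V i + ((w + s - of_int j * L - c i) / edge_len V n i) *\<^sub>R E i" by simp
  have ep: "edge_len V n i > 0" using e_pos assms by simp
  show "0 \<le> (w + s - of_int j * L - c i) / edge_len V n i" using b ep by simp
  show "(w + s - of_int j * L - c i) / edge_len V n i \<le> 1" using b ep by (simp add: c_Suc)
qed

end


context cpoly begin

lemma piece:
  assumes Pdef: "\<And>s. P s = bdry_param V n (s0 + s)"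
    and adef: "\<And>s. \<alpha> s = area_diff Q (P s) (P (s + L / 2))"
    and a01: "a0 < a1" "a1 - a0 \<le> L / 4"
    and nb1: "\<And>s. a0 < s \<Longrightarrow> s < a1 \<Longrightarrow> \<not> (\<exists>k\<le>n. \<exists>j::int. s0 + s = c k + of_int j * L)"
    and nb2: "\<And>s. a0 < s \<Longrightarrow> s < a1 \<Longrightarrow> \<not> (\<exists>k\<le>n. \<exists>j::int. (s0 + L / 2) + s = c k + of_int j * L)"
  shows "\<exists>a b cc. \<forall>s\<in>{a0..a1}. \<alpha> s = a + b * s + cc * s\<^sup>2"
proof -
  obtain i j where ij: "i < n" "\<forall>s\<in>{a0..a1}. c i \<le> s0 + s - of_int j * L \<and> s0 + s - of_int j * L \<le> c (Suc i)"
    using stay[OF a01(1) nb1] by blast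
  obtain i' j' where ij': "i' < n" "\<forall>s\<in>{a0..a1}. c i' \<le> (s0 + L / 2) + s - of_int j' * L \<and> (s0 + L / 2) + s - of_int j' * L \<le> c (Suc i')"
    using stay[OF a01(1) nb2] by blast
  define e where "e = edge_len V n i"
  define e' where "e' = edge_len V n i'"
  have ep: "e > 0" "e' > 0" using e_pos ij(1) ij'(1) by (auto simp: e_def e'_def)
  define lam where "lam s = (s0 + s - of_int j * L - c i) / e" for s
  define mu where "mu s = ((s0 + L / 2) + s - of_int j' * L - c i') / e'" for s
  define q where "q s = P (s + L / 2)" for s
  define G where "G = area_diff Q"
  have Pe: "P s = V i + lam s *\<^sub>R E i" if "s \<in> {a0..a1}" for s
    using on_edge(1)[OF ij(1) ij(2) that] Pdef by (simp add: lam_def e_def)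
  have lam01: "0 \<le> lam s" "lam s \<le> 1" if "s \<in> {a0..a1}" for s
    using on_edge(2,3)[OF ij(1) ij(2) that] by (simp_all add: lam_def e_def)
  have qe: "q s = V i' + mu s *\<^sub>R E i'" if "s \<in> {a0..a1}" for s
  proof -
    have "q s = bdry_param V n ((s0 + L / 2) + s)" unfolding q_def Pdef by (simp add: algebra_simps)
    then show ?thesis using on_edge(1)[OF ij'(1) ij'(2) that] by (simp add: mu_def e'_def)
  qed
  have mu01: "0 \<le> mu s" "mu s \<le> 1" if "s \<in> {a0..a1}" for s
    using on_edge(2,3)[OF ij'(1) ij'(2) that] by (simp_all add: mu_def e'_def)
  have lam_aff: "lam (a0 + \<theta> * (s - a0)) = (1 - \<theta>) * lam a0 + \<theta> * lam s" for \<theta> s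
    unfolding lam_def using ep by (simp add: field_simps)
  have mu_aff: "mu (a0 + \<theta> * (s - a0)) = (1 - \<theta>) * mu a0 + \<theta> * mu s" for \<theta> s
    unfolding mu_def using ep by (simp add: field_simps)
  have lam_mono: "lam a0 \<le> lam s" if "a0 \<le> s" for s
    unfolding lam_def using ep that by (simp add: divide_right_mono)
  have mu_mono: "mu a0 \<le> mu s" if "a0 \<le> s" for s
    unfolding mu_def using ep that by (simp add: divide_right_mono)
  have a0in: "a0 \<in> {a0..a1}" using a01 by simp
  have inQP: "P s \<in> Q" if "s \<in> {a0..a1}" for s
    using Pe[OF that] edge_in_Q[OF ij(1) lam01[OF that]] by simp
  have inQq: "q s \<in> Q" if "s \<in> {a0..a1}" for s
    using qe[OF that] edge_in_Q[OF ij'(1) mu01[OF that]] by simp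
  have sgnz: "\<sigma> \<noteq> 0" using sg by auto
  have Enz: "\<sigma> *\<^sub>R E i \<noteq> 0" "\<sigma> *\<^sub>R E i' \<noteq> 0" using E_nz ij(1) ij'(1) sgnz by auto
  have key: "\<alpha> s = G (P a0) (q a0) + cross2 (P s - P a0) (q a0 - P a0) - cross2 (q s - q a0) (P s - q a0)"
    if s: "s \<in> {a0..a1}" for s
  proof -
    have sa: "a0 \<le> s" "s - a0 \<le> L / 4" using s a01 by auto
    have step1: "G (P s) (q a0) - G (P a0) (q a0) = cross2 (P s - P a0) (q a0 - P a0)"
    proof -
      have sup1: "\<forall>x\<in>Q. \<sigma> * cross2 (P s - P a0) (x - P a0) \<ge> 0"
      proof
        fix x assume x: "x \<in> Q"
        have "\<sigma> * cross2 (P s - P a0) (x - P a0) = (lam s - lam a0) * (\<sigma> * cross2 (E i) (x - V i))"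
          unfolding Pe[OF s] Pe[OF a0in] by (simp add: cross2_def algebra_simps)
        then show "\<sigma> * cross2 (P s - P a0) (x - P a0) \<ge> 0"
          using support[OF ij(1) x] lam_mono[OF sa(1)] by (metis diff_ge_0_iff_ge mult_nonneg_nonneg)
      qed
      have supq: "\<forall>x\<in>Q. cross2 (\<sigma> *\<^sub>R E i') (x - q a0) \<ge> 0"
      proof
        fix x assume x: "x \<in> Q"
        have "cross2 (\<sigma> *\<^sub>R E i') (x - q a0) = \<sigma> * cross2 (E i') (x - V i')"
          unfolding qe[OF a0in] by (simp add: cross2_def algebra_simps)
        then show "cross2 (\<sigma> *\<^sub>R E i') (x - q a0) \<ge> 0" using support[OF ij'(1) x] by simp
      qed
      have nseg: "q a0 \<notin> closed_segment (P a0) (P s)"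
      proof
        assume "q a0 \<in> closed_segment (P a0) (P s)"
        then obtain \<theta> where th: "0 \<le> \<theta>" "\<theta> \<le> 1" "q a0 = V i + ((1 - \<theta>) * lam a0 + \<theta> * lam s) *\<^sub>R E i"
          unfolding Pe[OF s] Pe[OF a0in] using seg_affine by blast
        define u where "u = a0 + \<theta> * (s - a0)"
        have tle: "\<theta> * (s - a0) \<le> s - a0" using th sa by (simp add: mult_left_le_one_le)
        have u: "u \<in> {a0..a1}" using th sa tle s by (auto simp: u_def)
        have "P u = q a0" using Pe[OF u] th(3) lam_aff by (simp add: u_def)
        then have "bdry_param V n (s0 + (a0 + L / 2)) = bdry_param V n (s0 + u)"
          by (simp add: q_def Pdef)
        moreover have "0 < (s0 + (a0 + L / 2)) - (s0 + u)" "(s0 + (a0 + L / 2)) - (s0 + u) < L"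
          using tle sa th L_pos mult_nonneg_nonneg[of \<theta> "s - a0"] unfolding u_def by linarith+
        ultimately show False by (rule no_wrap)
      qed
      show ?thesis unfolding G_def
        by (rule KL[OF Q_convex Q_meas inQP[OF a0in] inQP[OF s] inQq[OF a0in] sg sup1 Enz(2) supq nseg])
    qed
    have step2: "G (q s) (P s) - G (q a0) (P s) = cross2 (q s - q a0) (P s - q a0)"
    proof -
      have sup1: "\<forall>x\<in>Q. \<sigma> * cross2 (q s - q a0) (x - q a0) \<ge> 0"
      proof
        fix x assume x: "x \<in> Q"
        have "\<sigma> * cross2 (q s - q a0) (x - q a0) = (mu s - mu a0) * (\<sigma> * cross2 (E i') (x - V i'))"
          unfolding qe[OF s] qe[OF a0in] by (simp add: cross2_def algebra_simps)
        then show "\<sigma> * cross2 (q s - q a0) (x - q a0) \<ge> 0"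
          using support[OF ij'(1) x] mu_mono[OF sa(1)] by (metis diff_ge_0_iff_ge mult_nonneg_nonneg)
      qed
      have supq: "\<forall>x\<in>Q. cross2 (\<sigma> *\<^sub>R E i) (x - P s) \<ge> 0"
      proof
        fix x assume x: "x \<in> Q"
        have "cross2 (\<sigma> *\<^sub>R E i) (x - P s) = \<sigma> * cross2 (E i) (x - V i)"
          unfolding Pe[OF s] by (simp add: cross2_def algebra_simps)
        then show "cross2 (\<sigma> *\<^sub>R E i) (x - P s) \<ge> 0" using support[OF ij(1) x] by simp
      qed
      have nseg: "P s \<notin> closed_segment (q a0) (q s)"
      proof
        assume "P s \<in> closed_segment (q a0) (q s)"
        then obtain \<theta> where th: "0 \<le> \<theta>" "\<theta> \<le> 1" "P s = V i' + ((1 - \<theta>) * mu a0 + \<theta> * mu s) *\<^sub>R E i'"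
          unfolding qe[OF s] qe[OF a0in] using seg_affine by blast
        define u where "u = a0 + \<theta> * (s - a0)"
        have tle: "\<theta> * (s - a0) \<le> s - a0" using th sa by (simp add: mult_left_le_one_le)
        have u: "u \<in> {a0..a1}" using th sa tle s by (auto simp: u_def)
        have "q u = P s" using qe[OF u] th(3) mu_aff by (simp add: u_def)
        then have "bdry_param V n (s0 + (u + L / 2)) = bdry_param V n (s0 + s)"
          by (simp add: q_def Pdef)
        moreover have "0 < (s0 + (u + L / 2)) - (s0 + s)" "(s0 + (u + L / 2)) - (s0 + s) < L"
          using tle sa th L_pos mult_nonneg_nonneg[of \<theta> "s - a0"] unfolding u_def by linarith+
        ultimately show False by (rule no_wrap)
      qed
      show ?thesis unfolding G_def
        by (rule KL[OF Q_convex Q_meas inQq[OF a0in] inQq[OF s] inQP[OF s] sg sup1 Enz(1) supq nseg])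
    qed
    have sw1: "G (P s) (q s) = - G (q s) (P s)" "G (P s) (q a0) = - G (q a0) (P s)"
      unfolding G_def by (rule area_diff_swap)+
    have "\<alpha> s = G (P s) (q s)" by (simp add: adef G_def q_def)
    then show ?thesis using step1 step2 sw1 by linarith
  qed
  define A where "A = V i + ((s0 - of_int j * L - c i) / e) *\<^sub>R E i"
  define U where "U = (1 / e) *\<^sub>R E i"
  define B where "B = V i' + ((s0 + L / 2 - of_int j' * L - c i') / e') *\<^sub>R E i'"
  define W where "W = (1 / e') *\<^sub>R E i'"
  have PA: "P s = A + s *\<^sub>R U" if "s \<in> {a0..a1}" for s
  proof -
    have "lam s = (s0 - of_int j * L - c i) / e + s * (1 / e)" unfolding lam_def using ep by (simp add: field_simps)
    then show ?thesis using Pe[OF that] by (simp add: A_def U_def scaleR_add_left)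
  qed
  have qB: "q s = B + s *\<^sub>R W" if "s \<in> {a0..a1}" for s
  proof -
    have "mu s = (s0 + L / 2 - of_int j' * L - c i') / e' + s * (1 / e')" unfolding mu_def using ep by (simp add: field_simps)
    then show ?thesis using qe[OF that] by (simp add: B_def W_def scaleR_add_left)
  qed
  obtain a b cc where abc: "\<forall>s::real. G (P a0) (q a0) + cross2 ((A - P a0) + s *\<^sub>R U) (q a0 - P a0)
      - cross2 ((B - q a0) + s *\<^sub>R W) ((A - q a0) + s *\<^sub>R U) = a + b * s + cc * s\<^sup>2"
    using poly_form by blast
  have "\<forall>s\<in>{a0..a1}. \<alpha> s = a + b * s + cc * s\<^sup>2"
  proof
    fix s assume s: "s \<in> {a0..a1}"
    have "\<alpha> s = G (P a0) (q a0) + cross2 ((A - P a0) + s *\<^sub>R U) (q a0 - P a0)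
      - cross2 ((B - q a0) + s *\<^sub>R W) ((A - q a0) + s *\<^sub>R U)"
      using key[OF s] PA[OF s] qB[OF s] by (simp add: algebra_simps)
    then show "\<alpha> s = a + b * s + cc * s\<^sup>2" using abc by simp
  qed
  then show ?thesis by blast
qed

end


lemma partition_real:
  fixes B :: "real set"
  assumes "finite B" "B \<subseteq> {a..b}" "a \<in> B" "b \<in> B" "a < b"
  shows "\<exists>m t. t 0 = a \<and> t m = b \<and> (\<forall>k<m. t k < t (Suc k)) \<and>
     (\<forall>k<m. t k \<in> B \<and> t (Suc k) \<in> B \<and> (\<forall>x\<in>B. \<not> (t k < x \<and> x < t (Suc k))))"
proof -
  obtain xs where xs: "sorted_wrt (<) xs" "set xs = B"
    using ex1_sorted_list_for_set_if_finite[OF assms(1)] by blast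
  have le: "xs ! p \<le> xs ! q" if "p \<le> q" "q < length xs" for p q
    using sorted_wrt_nth_less[OF xs(1), of p q] that by (cases "p = q") auto
  have mem: "xs ! p \<in> B" if "p < length xs" for p using xs(2) that by auto
  obtain pa where pa: "pa < length xs" "xs ! pa = a" using assms(3) xs(2) by (metis in_set_conv_nth)
  obtain pb where pb: "pb < length xs" "xs ! pb = b" using assms(4) xs(2) by (metis in_set_conv_nth)
  define m where "m = length xs - 1"
  have lm: "length xs = Suc m" using pa by (simp add: m_def)
  have t0: "xs ! 0 = a"
  proof -
    have "xs ! 0 \<le> a" using le[of 0 pa] pa by simp
    moreover have "xs ! 0 \<ge> a" using mem[of 0] assms(2) lm by auto
    ultimately show ?thesis by simp
  qed
  have tm: "xs ! m = b"
  proof -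
    have "xs ! m \<ge> b" using le[of pb m] pb lm by simp
    moreover have "xs ! m \<le> b" using mem[of m] assms(2) lm by auto
    ultimately show ?thesis by simp
  qed
  have inc: "\<forall>k<m. xs ! k < xs ! Suc k" using sorted_wrt_nth_less[OF xs(1)] lm by simp
  have gap: "\<forall>k<m. xs ! k \<in> B \<and> xs ! Suc k \<in> B \<and> (\<forall>x\<in>B. \<not> (xs ! k < x \<and> x < xs ! Suc k))"
  proof (intro allI impI)
    fix k assume k: "k < m"
    have "\<not> (xs ! k < x \<and> x < xs ! Suc k)" if x: "x \<in> B" for x
    proof -
    obtain p where p: "p < length xs" "xs ! p = x" using x xs(2) by (metis in_set_conv_nth)
    show "\<not> (xs ! k < x \<and> x < xs ! Suc k)"
    proof (cases "p \<le> k")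
      case True then show ?thesis using le[of p k] k lm p by auto
    next
      case False then show ?thesis using le[of "Suc k" p] k lm p by auto
    qed
    qed
    then show "xs ! k \<in> B \<and> xs ! Suc k \<in> B \<and> (\<forall>x\<in>B. \<not> (xs ! k < x \<and> x < xs ! Suc k))"
      using mem k lm by auto
  qed
  show ?thesis using t0 tm inc gap by (intro exI[of _ m] exI[of _ "\<lambda>k. xs ! k"]) simp
qed

lemma cont_pieces:
  fixes f :: "real \<Rightarrow> real"
  assumes "t 0 = a" "\<forall>k<m. t k < t (Suc k)" "\<forall>k<m. continuous_on {t k..t (Suc k)} f"
  shows "continuous_on {a..t m} f"
proof -
  have "a \<le> t m \<and> continuous_on {a..t m} f" using assms(2,3)
  proof (induction m)
    case 0 then show ?case using assms(1) by simp
  next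
    case (Suc m)
    then have IH: "a \<le> t m" "continuous_on {a..t m} f" by auto
    have lt: "t m < t (Suc m)" using Suc.prems by simp
    have "{a..t (Suc m)} = {a..t m} \<union> {t m..t (Suc m)}" using IH lt by auto
    moreover have "continuous_on ({a..t m} \<union> {t m..t (Suc m)}) f"
      using IH Suc.prems by (intro continuous_on_closed_Un) auto
    ultimately show ?case using IH lt by simp
  qed
  then show ?thesis by simp
qed

lemma cont_periodic:
  fixes f :: "real \<Rightarrow> real"
  assumes L: "L > 0" and per: "\<And>s. f (s + L) = f s" and c: "continuous_on {0..L} f"
  shows "continuous_on UNIV f"
proof -
  have pn: "f (s + real k * L) = f s" for s k
  proof (induction k arbitrary: s)
    case 0 show ?case by simp
  next
    case (Suc k)
    have "s + real (Suc k) * L = (s + real k * L) + L" by (simp add: algebra_simps)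
    then have "f (s + real (Suc k) * L) = f (s + real k * L)" using per[of "s + real k * L"] by (simp add: add.assoc)
    then show ?case using Suc.IH by simp
  qed
  have pz: "f (s + of_int j * L) = f s" for s j
  proof (cases "j \<ge> 0")
    case True then have "j = int (nat j)" by simp
    then show ?thesis using pn[of s "nat j"] by (metis of_int_of_nat_eq)
  next
    case False then have j: "j = - int (nat (- j))" by simp
    define k where "k = nat (- j)"
    have "real k = of_int (- j)" using False by (simp add: k_def)
    then have "of_int j * L = - (real k * L)" by simp
    then show ?thesis using pn[of "s - real k * L" k] by simp
  qed
  have c1: "continuous_on {-L..0} f"
  proof -
    have "continuous_on {-L..0} (\<lambda>z. f (z + L))"
      by (rule continuous_on_compose2[OF c]) (auto intro!: continuous_intros)
    then show ?thesis using per by simp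
  qed
  have "continuous_on ({-L..0} \<union> {0..L}) f" using c1 c by (intro continuous_on_closed_Un) auto
  moreover have "{-L..0} \<union> {0..L} = {-L..L}" using L by auto
  ultimately have cL: "continuous_on {-L..L} f" by simp
  show ?thesis
  proof (rule continuous_at_imp_continuous_on, intro ballI)
    fix x :: real
    define j where "j = \<lfloor>x / L\<rfloor>"
    define y where "y = x - of_int j * L"
    have "of_int j * L \<le> x" "x < (of_int j + 1) * L"
      using floor_divide_lower[OF L] floor_divide_upper[OF L] by (auto simp: j_def)
    then have "y \<in> {-L<..<L}" using L by (auto simp: y_def algebra_simps)
    then have "isCont f y" using continuous_on_interior[OF cL] by simp
    moreover have "isCont (\<lambda>z. z - of_int j * L) x" by (intro continuous_intros)
    ultimately have "isCont (\<lambda>z. f (z - of_int j * L)) x" unfolding y_def by (rule isCont_o2[rotated])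
    moreover have "(\<lambda>z. f (z - of_int j * L)) = f" using pz[of _ "- j"] by (auto simp: fun_eq_iff)
    ultimately show "isCont f x" by simp
  qed
qed



lemma finite_hits:
  fixes n :: nat
  assumes L: "L > 0"
  shows "finite {s \<in> {0..L}. \<exists>k\<le>n. \<exists>j::int. w + s = (cl k :: real) + of_int j * L}"
proof -
  have eq: "{s \<in> {0..L}. \<exists>k\<le>n. \<exists>j::int. w + s = cl k + of_int j * L}
      \<subseteq> (\<Union>k\<in>{..n}. (\<lambda>j. cl k + of_int j * L - w) ` {\<lceil>(w - cl k) / L\<rceil>..\<lfloor>(L + w - cl k) / L\<rfloor>})"
  proof
    fix s assume "s \<in> {s \<in> {0..L}. \<exists>k\<le>n. \<exists>j::int. w + s = cl k + of_int j * L}"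
    then obtain k j where kj: "k \<le> n" "w + s = cl k + of_int j * L" "0 \<le> s" "s \<le> L" by auto
    have "(w - cl k) / L \<le> of_int j" using kj L by (simp add: pos_divide_le_eq)
    moreover have "of_int j \<le> (L + w - cl k) / L" using kj L by (simp add: pos_le_divide_eq)
    ultimately have "j \<in> {\<lceil>(w - cl k) / L\<rceil>..\<lfloor>(L + w - cl k) / L\<rfloor>}"
      by (simp add: ceiling_le_iff le_floor_iff)
    moreover have "s = cl k + of_int j * L - w" using kj by simp
    ultimately show "s \<in> (\<Union>k\<in>{..n}. (\<lambda>j. cl k + of_int j * L - w) ` {\<lceil>(w - cl k) / L\<rceil>..\<lfloor>(L + w - cl k) / L\<rfloor>})"
      using kj(1) by blast
  qed
  show ?thesis by (rule finite_subset[OF eq], intro finite_UN_I finite_imageI) (simp_all add: finite_atLeastAtMost_int)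
qed

theorem lemma1:
  fixes V :: "nat \<Rightarrow> real^2" and n :: nat and \<sigma> s0 :: real
    and P :: "real \<Rightarrow> real^2" and \<alpha> :: "real \<Rightarrow> real" and L :: real
  assumes "convex_polygon V n \<sigma>"
    and "L = perimeter V n"
    and "\<And>s. P s = bdry_param V n (s0 + s)"
    and "\<And>s. \<alpha> s = area_diff (polygon_region V n) (P s) (P (s + L / 2))"
  shows "continuous_on UNIV \<alpha> \<and>
    (\<exists>m t. t 0 = 0 \<and> t m = L \<and> (\<forall>k<m. t k < t (Suc k)) \<and>
       (\<forall>k<m. \<exists>a b c. \<forall>s\<in>{t k..t (Suc k)}. \<alpha> s = a + b * s + c * s\<^sup>2))"
proof -
  interpret cpoly V n \<sigma> by unfold_locales (rule assms(1))
  have Lp: "L > 0" using L_pos assms(2) by simp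
  have Pdef: "\<And>s. P s = bdry_param V n (s0 + s)" by fact
  have adef: "\<And>s. \<alpha> s = area_diff Q (P s) (P (s + perimeter V n / 2))" using assms(4) assms(2) by simp
  define H where "H w = {s \<in> {0..L}. \<exists>k\<le>n. \<exists>j::int. w + s = cum_len V n k + of_int j * L}" for w
  have finH: "finite (H w)" for w unfolding H_def by (rule finite_hits[OF Lp])
  define B where "B = {0, L/4, L/2, 3*L/4, L} \<union> H s0 \<union> H (s0 + L/2)"
  have Bf: "finite B" using finH by (simp add: B_def)
  have Bs: "B \<subseteq> {0..L}" using Lp unfolding B_def H_def by auto
  obtain m t where mt: "t 0 = 0" "t m = L" "\<forall>k<m. t k < t (Suc k)"
    "\<forall>k<m. t k \<in> B \<and> t (Suc k) \<in> B \<and> (\<forall>x\<in>B. \<not> (t k < x \<and> x < t (Suc k)))"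
    using partition_real[OF Bf Bs _ _ Lp] by (auto simp: B_def)
  have pieces: "\<exists>a b cc. \<forall>s\<in>{t k..t (Suc k)}. \<alpha> s = a + b * s + cc * s\<^sup>2" if k: "k < m" for k
  proof -
    have lt: "t k < t (Suc k)" using mt(3) k by simp
    have inB: "t k \<in> B" "t (Suc k) \<in> B" and gap: "\<forall>x\<in>B. \<not> (t k < x \<and> x < t (Suc k))" using mt(4) k by auto
    have rng: "0 \<le> t k" "t (Suc k) \<le> L" using inB Bs by auto
    have q: "\<not> (t k < x \<and> x < t (Suc k))" if "x \<in> {L/4, L/2, 3*L/4}" for x
    proof -
      have "x \<in> B" using that unfolding B_def by blast
      then show ?thesis using gap by blast
    qed
    have len: "t (Suc k) - t k \<le> L / 4"
    proof -
      have "\<not> (t k < L/4 \<and> L/4 < t (Suc k))" "\<not> (t k < L/2 \<and> L/2 < t (Suc k))"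
        "\<not> (t k < 3*L/4 \<and> 3*L/4 < t (Suc k))" by (rule q; simp)+
      then show ?thesis using rng lt Lp by argo
    qed
    show ?thesis
    proof (rule piece[OF Pdef adef lt])
      show "t (Suc k) - t k \<le> perimeter V n / 4" using len assms(2) by simp
      show "\<not> (\<exists>k\<le>n. \<exists>j::int. s0 + s = cum_len V n k + of_int j * perimeter V n)"
        if "t k < s" "s < t (Suc k)" for s
      proof
        assume "\<exists>k\<le>n. \<exists>j::int. s0 + s = cum_len V n k + of_int j * perimeter V n"
        moreover have "s \<in> {0..L}" using that rng by auto
        ultimately have "s \<in> H s0" unfolding H_def using assms(2) by simp
        then have "s \<in> B" unfolding B_def by blast
        then show False using gap that by blast
      qed
      show "\<not> (\<exists>k\<le>n. \<exists>j::int. (s0 + perimeter V n / 2) + s = cum_len V n k + of_int j * perimeter V n)"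
        if "t k < s" "s < t (Suc k)" for s
      proof
        assume "\<exists>k\<le>n. \<exists>j::int. (s0 + perimeter V n / 2) + s = cum_len V n k + of_int j * perimeter V n"
        moreover have "s \<in> {0..L}" using that rng by auto
        ultimately have "s \<in> H (s0 + L / 2)" unfolding H_def using assms(2) by simp
        then have "s \<in> B" unfolding B_def by blast
        then show False using gap that by blast
      qed
    qed
  qed
  have contp: "\<forall>k<m. continuous_on {t k..t (Suc k)} \<alpha>"
  proof (intro allI impI)
    fix k assume "k < m"
    then obtain a b cc where abc: "\<forall>s\<in>{t k..t (Suc k)}. \<alpha> s = a + b * s + cc * s\<^sup>2" using pieces by blast
    have "continuous_on {t k..t (Suc k)} (\<lambda>s. a + b * s + cc * s\<^sup>2)" by (intro continuous_intros)
    then show "continuous_on {t k..t (Suc k)} \<alpha>" by (rule continuous_on_eq) (use abc in auto)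
  qed
  have c0L: "continuous_on {0..L} \<alpha>" using cont_pieces[OF mt(1) mt(3) contp] mt(2) by simp
  have Pper: "P (x + L) = P x" for x
    using Pdef bp_periodic[of "s0 + x" 1] assms(2) by (simp add: add.assoc)
  have aper: "\<alpha> (s + L) = \<alpha> s" for s
  proof -
    have "P (s + L + L / 2) = P (s + L / 2)" using Pper[of "s + L/2"] by (simp add: algebra_simps)
    then show ?thesis using assms(4) Pper[of s] by simp
  qed
  have "continuous_on UNIV \<alpha>" by (rule cont_periodic[OF Lp aper c0L])
  moreover have "\<forall>k<m. \<exists>a b c. \<forall>s\<in>{t k..t (Suc k)}. \<alpha> s = a + b * s + c * s\<^sup>2" using pieces by blast
  ultimately show ?thesis using mt(1-3) by blast
qed


end
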